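(* Every closure semilattice can be embedded into some closure space. That is, if $\mathbf S=(S,\vee_{\mathbf S},K_{\mathbf S})$ is a closure semilattice, then there exist a set $X$, a closure operation $K$ on $\mathcal P(X)$ and an injective map $\varphi:S\to\mathcal P(X)$ such that $\varphi(a\vee_{\mathbf S}b)=\varphi(a)\cup\varphi(b)$ and $\varphi(K_{\mathbf S}a)=K\varphi(a)$ for all $a,b\in S$.
   Context: A closure operation on a poset is a unary operation $K$ which is extensive ($x\le Kx$), idempotent ($KKx=Kx$) and isotone ($x\le y\Rightarrow Kx\le Ky$). A closure semilattice is a join semilattice endowed with a closure operation (with respect to the order induced by the join). A closure space is a set $X$ with a closure operation $K$ on $(\mathcal P(X),\subseteq)$, regarded as the structure $(\mathcal P(X),\cup,K)$. *)

theory Defs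
  imports Main
begin

definition join_semilattice :: "'a set \<Rightarrow> ('a \<Rightarrow> 'a \<Rightarrow> 'a) \<Rightarrow> bool" where
  "join_semilattice S j \<longleftrightarrow>
     (\<forall>a\<in>S. \<forall>b\<in>S. j a b \<in> S) \<and>
     (\<forall>a\<in>S. j a a = a) \<and>
     (\<forall>a\<in>S. \<forall>b\<in>S. j a b = j b a) \<and>
     (\<forall>a\<in>S. \<forall>b\<in>S. \<forall>c\<in>S. j (j a b) c = j a (j b c))"

definition sl_le :: "('a \<Rightarrow> 'a \<Rightarrow> 'a) \<Rightarrow> 'a \<Rightarrow> 'a \<Rightarrow> bool" where
  "sl_le j a b \<longleftrightarrow> j a b = b"

definition closure_op :: "'a set \<Rightarrow> ('a \<Rightarrow> 'a \<Rightarrow> bool) \<Rightarrow> ('a \<Rightarrow> 'a) \<Rightarrow> bool" where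
  "closure_op P le K \<longleftrightarrow>
     (\<forall>x\<in>P. K x \<in> P) \<and>
     (\<forall>x\<in>P. le x (K x)) \<and>
     (\<forall>x\<in>P. K (K x) = K x) \<and>
     (\<forall>x\<in>P. \<forall>y\<in>P. le x y \<longrightarrow> le (K x) (K y))"

definition closure_semilattice :: "'a set \<Rightarrow> ('a \<Rightarrow> 'a \<Rightarrow> 'a) \<Rightarrow> ('a \<Rightarrow> 'a) \<Rightarrow> bool" where
  "closure_semilattice S j K \<longleftrightarrow> join_semilattice S j \<and> closure_op S (sl_le j) K"

definition closure_space :: "'b set \<Rightarrow> ('b set \<Rightarrow> 'b set) \<Rightarrow> bool" where
  "closure_space X K \<longleftrightarrow> closure_op (Pow X) (\<subseteq>) K"

end

theory Submission
  imports Defs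
begin

lemma js_trans:
  assumes "join_semilattice S j" "a\<in>S" "b\<in>S" "c\<in>S" "j a b = b" "j b c = c"
  shows "j a c = c"
  using assms unfolding join_semilattice_def by metis

lemma js_antisym:
  assumes "join_semilattice S j" "a\<in>S" "b\<in>S" "j a b = b" "j b a = a"
  shows "a = b"
  using assms unfolding join_semilattice_def by metis

lemma js_upper:
  assumes "join_semilattice S j" "a\<in>S" "b\<in>S" "x\<in>S"
  shows "j (j a b) x = x \<longleftrightarrow> j a x = x \<and> j b x = x"
proof
  assume h: "j (j a b) x = x"
  have ab: "j a b \<in> S" using assms unfolding join_semilattice_def by blast
  have 1: "j a (j a b) = j a b" using assms unfolding join_semilattice_def by metis
  have 2: "j b (j a b) = j a b" using assms unfolding join_semilattice_def by metis
  show "j a x = x \<and> j b x = x"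
    using js_trans[OF assms(1) assms(2) ab assms(4) 1 h] js_trans[OF assms(1) assms(3) ab assms(4) 2 h]
    by blast
next
  assume "j a x = x \<and> j b x = x"
  then show "j (j a b) x = x" using assms unfolding join_semilattice_def by metis
qed

theorem theorem5p1:
  fixes S :: "'a set" and j :: "'a \<Rightarrow> 'a \<Rightarrow> 'a" and KS :: "'a \<Rightarrow> 'a"
  assumes "closure_semilattice S j KS"
  shows "\<exists>(X :: 'a set) (K :: 'a set \<Rightarrow> 'a set) (\<phi> :: 'a \<Rightarrow> 'a set).
           closure_space X K \<and> inj_on \<phi> S \<and> (\<forall>a\<in>S. \<phi> a \<subseteq> X) \<and>
           (\<forall>a\<in>S. \<forall>b\<in>S. \<phi> (j a b) = \<phi> a \<union> \<phi> b) \<and>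
           (\<forall>a\<in>S. \<phi> (KS a) = K (\<phi> a))"
proof -
  have js: "join_semilattice S j" and co: "closure_op S (sl_le j) KS"
    using assms unfolding closure_semilattice_def by auto
  have jc: "\<And>a b. a\<in>S \<Longrightarrow> b\<in>S \<Longrightarrow> j a b \<in> S" and jid: "\<And>a. a\<in>S \<Longrightarrow> j a a = a"
    using js unfolding join_semilattice_def by auto
  have KSin: "\<And>a. a\<in>S \<Longrightarrow> KS a \<in> S" and KSext: "\<And>a. a\<in>S \<Longrightarrow> j a (KS a) = KS a"
    and KSid: "\<And>a. a\<in>S \<Longrightarrow> KS (KS a) = KS a"
    and KSmono: "\<And>a b. a\<in>S \<Longrightarrow> b\<in>S \<Longrightarrow> j a b = b \<Longrightarrow> j (KS a) (KS b) = KS b"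
    using co unfolding closure_op_def sl_le_def by auto
  define \<phi> where "\<phi> a = {x\<in>S. j a x \<noteq> x}" for a
  define Cl where "Cl = insert S {\<phi> c | c. c \<in> S \<and> KS c = c}"
  define K where "K A = \<Inter>{C\<in>Cl. A \<subseteq> C}" for A
  have phile: "\<phi> a \<subseteq> \<phi> c \<longleftrightarrow> j a c = c" if "a\<in>S" "c\<in>S" for a c
  proof
    assume "\<phi> a \<subseteq> \<phi> c"
    moreover have "c \<notin> \<phi> c" using jid[OF that(2)] unfolding \<phi>_def by auto
    ultimately show "j a c = c" using that unfolding \<phi>_def by auto
  next
    assume "j a c = c"
    then show "\<phi> a \<subseteq> \<phi> c" using that js_trans[OF js that] unfolding \<phi>_def by auto
  qed
  have ClS: "C \<subseteq> S" if "C \<in> Cl" for C using that unfolding Cl_def \<phi>_def by auto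
  have cs: "closure_space S K"
    unfolding closure_space_def closure_op_def K_def
  proof (intro conjI ballI impI)
    fix x :: "'a set" assume "x \<in> Pow S"
    show "\<Inter>{C\<in>Cl. x \<subseteq> C} \<in> Pow S" using \<open>x \<in> Pow S\<close> unfolding Cl_def by auto
    show "x \<subseteq> \<Inter>{C\<in>Cl. x \<subseteq> C}" by auto
    have "{C\<in>Cl. \<Inter>{C\<in>Cl. x \<subseteq> C} \<subseteq> C} = {C\<in>Cl. x \<subseteq> C}" by auto
    then show "\<Inter>{C\<in>Cl. \<Inter>{C\<in>Cl. x \<subseteq> C} \<subseteq> C} = \<Inter>{C\<in>Cl. x \<subseteq> C}" by simp
  next
    fix x y :: "'a set" assume "x \<subseteq> y"
    then show "\<Inter>{C\<in>Cl. x \<subseteq> C} \<subseteq> \<Inter>{C\<in>Cl. y \<subseteq> C}" by auto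
  qed
  have inj: "inj_on \<phi> S"
  proof (rule inj_onI)
    fix a b assume "a\<in>S" "b\<in>S" "\<phi> a = \<phi> b"
    then show "a = b" using phile js_antisym[OF js] by (metis order_refl)
  qed
  have join: "\<phi> (j a b) = \<phi> a \<union> \<phi> b" if "a\<in>S" "b\<in>S" for a b
    using js_upper[OF js that] jc[OF that] unfolding \<phi>_def by auto
  have clo: "\<phi> (KS a) = K (\<phi> a)" if a: "a\<in>S" for a
  proof
    have "\<phi> (KS a) \<in> Cl" using KSin[OF a] KSid[OF a] unfolding Cl_def by auto
    moreover have "\<phi> a \<subseteq> \<phi> (KS a)" using phile[OF a KSin[OF a]] KSext[OF a] by simp
    ultimately show "K (\<phi> a) \<subseteq> \<phi> (KS a)" unfolding K_def by auto
  next
    show "\<phi> (KS a) \<subseteq> K (\<phi> a)" unfolding K_def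
    proof (rule Inter_greatest)
      fix C assume "C \<in> {C\<in>Cl. \<phi> a \<subseteq> C}"
      then have C: "C \<in> Cl" "\<phi> a \<subseteq> C" by auto
      show "\<phi> (KS a) \<subseteq> C"
      proof (cases "C = S")
        case True then show ?thesis unfolding \<phi>_def by auto
      next
        case False
        then obtain c where c: "c\<in>S" "KS c = c" "C = \<phi> c" using C(1) unfolding Cl_def by auto
        then have "j a c = c" using phile[OF a c(1)] C(2) by simp
        then have "j (KS a) c = c" using KSmono[OF a c(1)] c(2) by simp
        then show ?thesis using phile[OF KSin[OF a] c(1)] c(3) by simp
      qed
    qed
  qed
  show ?thesis
    apply (rule exI[of _ S], rule exI[of _ K], rule exI[of _ \<phi>])
    using cs inj join clo unfolding \<phi>_def by auto
qed

end
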